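(* Let $\Sigma=(X,U_c,\phi)$ be a control system (in the sense defined in the context) satisfying the standing assumptions: (a) $U_c=BC(\mathbb{R}_{\geq 0};U)$; (b) $0$ is the unique equilibrium point of $\Sigma$; (c) $\Sigma$ is forward-complete. If $\Sigma$ admits an FTISS Lyapunov functional, then $\Sigma$ is finite-time input-to-state stable (FTISS), i.e., there exist $\beta\in\mathcal{GKL}$ and $\gamma\in\mathcal{K}$ such that $$\|\phi(t,x,u)\|_X\leq \beta(\|x\|_X,t)+\gamma(\|u\|_{U_c})\quad\text{for all }(t,x,u)\in\mathbb{R}_{\geq 0}\times X\times U_c.$$
   Context: $\mathbb{R}_{\geq 0}=[0,\infty)$, $\mathbb{R}_{>0}=(0,\infty)$. $BC(\mathbb{R}_{\geq 0};U)$ is the set of continuous $u:\mathbb{R}_{\geq0}\to U$ with $\|u\|_{U_c}:=\sup_{s\geq 0}\|u(s)\|_U<\infty$. Control system: $X$, $U$ are Banach spaces, $U_c\subset\{u:\mathbb{R}_{\geq0}\to U\}$ is a normed vector space such that (i) for all $u\in U_c$, $\tau\geq 0$, the shift $u(\cdot+\tau)\in U_c$ with $\|u(\cdot+\tau)\|_{U_c}\le\|u\|_{U_c}$; (ii) for $u_1,u_2\in U_c$ and $t>0$, the concatenation equal to $u_1(\tau)$ for $\tau\in[0,t]$ and $u_2(\tau-t)$ otherwise belongs to $U_c$. The transition map $\phi:D_\phi\to X$, $D_\phi\subseteq \mathbb{R}_{\geq0}\times X\times U_c$, satisfies: $\phi(0,x,u)=x$; causality ($\phi(t,x,\tilde u)=\phi(t,x,u)$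 whenever $\tilde u=u$ on $[0,t]$); $t\mapsto\phi(t,x,u)$ is continuous; cocycle property $\phi(h,\phi(t,x,u),u(t+\cdot))=\phi(t+h,x,u)$. Forward-complete means $\phi(t,x,u)$ is well defined for every $(t,x,u)\in\mathbb{R}_{\geq0}\times X\times U_c$. Equilibrium point $0$: $\phi(t,0,0)=0$ for all $t\ge 0$. Comparison functions: $\mathcal{K}$ = continuous strictly increasing $\gamma:\mathbb{R}_{\geq0}\to\mathbb{R}_{\geq0}$ with $\gamma(0)=0$; $\mathcal{K}_\infty$ = unbounded functions in $\mathcal{K}$. $\beta:\mathbb{R}_{\geq0}\times\mathbb{R}_{\geq0}\to\mathbb{R}_{\geq0}$ is in $\mathcal{GKL}$ if it is continuous, $s\mapsto\beta(s,0)$ is in $\mathcal{K}$, and for each fixed $s$ the map $t\mapsto\beta(s,t)$ is continuous, decreases to zero, and there is a nonnegative continuous function $T(s)$ with $\beta(s,t)=0$ for all $t\geq T(s)$. Lie derivative: for $x\in X$, $u\in U_c$ and $V$ defined near $x$, $\dot V_u(x):=\limsup_{t\to0^+}\frac{V(\phi(t,x,u))-V(x)}{t}$. FTISS Lyapunov functional: a continuous $V:X\to\mathbb{R}_{\geq0}$ for which there exist $M>0$, $\sigma_0\in(0,1)$, $\alpha_1,\alpha_2\in\mathcal{K}_\infty$, $\chi\in\mathcal{K}$ with $\alpha_1(\|x\|_X)\le V(x)\le\alpha_2(\|x\|_X)$ for all $x\in X$, and for all $u\in U_c$: $\|x\|_X\geq\chi(\|u\|_{U_c})\Rightarrow \dot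 V_u(x)\leq -MV^{\sigma_0}(x)$. *)

theory Defs
  imports "HOL-Analysis.Analysis"
begin

text \<open>The input space U_c = BC(R_{>=0}; U): continuous bounded functions on [0,inf).
  Inputs are represented as total functions real => 'u; only their restriction to
  [0,inf) matters (norm, causality).\<close>
definition BC :: "(real \<Rightarrow> 'u::real_normed_vector) set" where
  "BC = {u. continuous_on {0..} u \<and> bounded (u ` {0..})}"

definition ucnorm :: "(real \<Rightarrow> 'u::real_normed_vector) \<Rightarrow> real" where
  "ucnorm u = (SUP s\<in>{0..}. norm (u s))"

definition class_K :: "(real \<Rightarrow> real) \<Rightarrow> bool" where
  "class_K g \<longleftrightarrow> continuous_on {0..} g \<and> strict_mono_on {0..} g \<and> g 0 = 0"

definition class_Kinf :: "(real \<Rightarrow> real) \<Rightarrow> bool" where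
  "class_Kinf g \<longleftrightarrow> class_K g \<and> filterlim g at_top at_top"

definition class_GKL :: "(real \<Rightarrow> real \<Rightarrow> real) \<Rightarrow> bool" where
  "class_GKL \<beta> \<longleftrightarrow>
     continuous_on ({0..} \<times> {0..}) (\<lambda>(s,t). \<beta> s t) \<and>
     (\<forall>s\<ge>0. \<forall>t\<ge>0. \<beta> s t \<ge> 0) \<and>
     class_K (\<lambda>s. \<beta> s 0) \<and>
     (\<forall>s\<ge>0. continuous_on {0..} (\<beta> s) \<and> antimono_on {0..} (\<beta> s) \<and>
              ((\<beta> s) \<longlongrightarrow> 0) at_top) \<and>
     (\<exists>T. continuous_on {0..} T \<and> (\<forall>s\<ge>0. T s \<ge> 0 \<and> (\<forall>t\<ge>T s. \<beta> s t = 0)))"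

text \<open>Control system with U_c = BC, forward complete (phi total on t >= 0).\<close>
definition control_system ::
  "(real \<Rightarrow> 'x::banach \<Rightarrow> (real \<Rightarrow> 'u::banach) \<Rightarrow> 'x) \<Rightarrow> bool" where
  "control_system \<phi> \<longleftrightarrow>
     (\<forall>x. \<forall>u\<in>BC. \<phi> 0 x u = x) \<and>
     (\<forall>t\<ge>0. \<forall>x. \<forall>u\<in>BC. \<forall>v\<in>BC. (\<forall>s\<in>{0..t}. u s = v s) \<longrightarrow> \<phi> t x u = \<phi> t x v) \<and>
     (\<forall>x. \<forall>u\<in>BC. continuous_on {0..} (\<lambda>t. \<phi> t x u)) \<and>
     (\<forall>t\<ge>0. \<forall>h\<ge>0. \<forall>x. \<forall>u\<in>BC. \<phi> h (\<phi> t x u) (\<lambda>s. u (t + s)) = \<phi> (t + h) x u)"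

definition equilibrium :: "(real \<Rightarrow> 'x::banach \<Rightarrow> (real \<Rightarrow> 'u::banach) \<Rightarrow> 'x) \<Rightarrow> 'x \<Rightarrow> bool" where
  "equilibrium \<phi> x \<longleftrightarrow> (\<forall>t\<ge>0. \<phi> t x (\<lambda>_. 0) = x)"

definition lie_deriv ::
  "(real \<Rightarrow> 'x \<Rightarrow> (real \<Rightarrow> 'u) \<Rightarrow> 'x) \<Rightarrow> ('x \<Rightarrow> real) \<Rightarrow> (real \<Rightarrow> 'u) \<Rightarrow> 'x \<Rightarrow> ereal" where
  "lie_deriv \<phi> V u x = Limsup (at_right 0) (\<lambda>t. ereal ((V (\<phi> t x u) - V x) / t))"

definition FTISS_Lyapunov ::
  "(real \<Rightarrow> 'x::banach \<Rightarrow> (real \<Rightarrow> 'u::banach) \<Rightarrow> 'x) \<Rightarrow> ('x \<Rightarrow> real) \<Rightarrow> bool" where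
  "FTISS_Lyapunov \<phi> V \<longleftrightarrow>
     continuous_on UNIV V \<and> (\<forall>x. V x \<ge> 0) \<and>
     (\<exists>M \<sigma>0 \<alpha>1 \<alpha>2 chi. M > 0 \<and> 0 < \<sigma>0 \<and> \<sigma>0 < 1 \<and>
        class_Kinf \<alpha>1 \<and> class_Kinf \<alpha>2 \<and> class_K chi \<and>
        (\<forall>x. \<alpha>1 (norm x) \<le> V x \<and> V x \<le> \<alpha>2 (norm x)) \<and>
        (\<forall>x. \<forall>u\<in>BC. norm x \<ge> chi (ucnorm u) \<longrightarrow>
              lie_deriv \<phi> V u x \<le> ereal (- M * V x powr \<sigma>0)))"

definition FTISS :: "(real \<Rightarrow> 'x::banach \<Rightarrow> (real \<Rightarrow> 'u::banach) \<Rightarrow> 'x) \<Rightarrow> bool" where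
  "FTISS \<phi> \<longleftrightarrow> (\<exists>\<beta> \<gamma>. class_GKL \<beta> \<and> class_K \<gamma> \<and>
     (\<forall>t\<ge>0. \<forall>x. \<forall>u\<in>BC. norm (\<phi> t x u) \<le> \<beta> (norm x) t + \<gamma> (ucnorm u)))"

end

theory Submission
  imports Defs
begin

lemma local_decrease_bound:
  fixes f :: "real \<Rightarrow> real"
  assumes ab: "a \<le> b" and cont: "continuous_on {a..b} f"
    and loc: "\<And>t. a \<le> t \<Longrightarrow> t < b \<Longrightarrow> f t > c \<Longrightarrow> eventually (\<lambda>h. f (t+h) < f t) (at_right 0)"
  shows "f b \<le> max (f a) c"
proof (rule ccontr)
  assume "\<not> ?thesis"
  hence fb: "f b > max (f a) c" by linarith
  define L where "L = (max (f a) c + f b) / 2"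
  have L1: "max (f a) c < L" and L2: "L < f b" using fb by (auto simp: L_def)
  define T where "T = {t \<in> {a..b}. f t = L}"
  have "\<exists>x. a \<le> x \<and> x \<le> b \<and> f x = L"
    using L1 L2 ab cont by (intro IVT') auto
  hence Tne: "T \<noteq> {}" by (auto simp: T_def)
  have Tcl: "closed T" unfolding T_def
    by (rule continuous_closed_preimage_constant[OF cont]) auto
  have Tbd: "bdd_above T" unfolding T_def by (auto intro!: bdd_aboveI[of _ b])
  define s where "s = Sup T"
  have sT: "s \<in> T" unfolding s_def using closed_contains_Sup Tne Tbd Tcl by blast
  hence s1: "a \<le> s" "s \<le> b" "f s = L" by (auto simp: T_def)
  have sb: "s < b" using s1 L2 by (metis order_le_less less_irrefl)
  have above: "f t > L" if st: "s < t" "t \<le> b" for t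
  proof (rule ccontr)
    assume "\<not> f t > L"
    hence "f t \<le> L" by simp
    moreover have "continuous_on {t..b} f"
      using cont s1 that by (auto intro: continuous_on_subset)
    ultimately obtain y where "t \<le> y" "y \<le> b" "f y = L"
      using IVT'[of f t L b] L2 st by auto
    hence "y \<in> T" using that s1 by (auto simp: T_def)
    hence "y \<le> s" unfolding s_def using Tbd by (rule cSup_upper)
    thus False using that \<open>t \<le> y\<close> by simp
  qed
  have "c < L" using L1 by simp
  hence ev: "eventually (\<lambda>h. f (s+h) < f s) (at_right 0)"
    using loc s1 sb by auto
  moreover have "eventually (\<lambda>h. 0 < h \<and> h < b - s) (at_right (0::real))"
    using sb by (auto simp: eventually_at_right_field intro!: exI[of _ "b - s"])
  ultimately have "eventually (\<lambda>h. f (s+h) < f s \<and> 0 < h \<and> h < b - s) (at_right (0::real))"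
    by eventually_elim auto
  then obtain h where "f (s+h) < f s" "0 < h" "h < b - s"
    using eventually_happens trivial_limit_at_right_real by blast
  with above[of "s+h"] s1 show False by simp
qed

lemma class_K_mono: "class_K g \<Longrightarrow> 0 \<le> s \<Longrightarrow> s \<le> t \<Longrightarrow> g s \<le> g t"
  unfolding class_K_def by (rule strict_mono_on_leD) auto

lemma class_K_nonneg: "class_K g \<Longrightarrow> s \<ge> 0 \<Longrightarrow> g s \<ge> 0"
  using class_K_mono[of g 0 s] by (simp add: class_K_def)

lemma class_K_less_imp: "class_K g \<Longrightarrow> 0 \<le> s \<Longrightarrow> 0 \<le> t \<Longrightarrow> g s < g t \<Longrightarrow> s < t"
  using class_K_mono[of g t s] by (meson not_le)

lemma class_K_comp:
  assumes "class_K f" "class_K g" shows "class_K (\<lambda>s. f (g s))"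
proof -
  have gi: "g ` {0..} \<subseteq> {0..}" using class_K_nonneg[OF assms(2)] by auto
  show ?thesis unfolding class_K_def
  proof (intro conjI)
    show "continuous_on {0..} (\<lambda>s. f (g s))"
      using assms gi unfolding class_K_def
      by (intro continuous_on_compose2[of "{0..}" f "{0..}" g]) auto
    show "strict_mono_on {0..} (\<lambda>s. f (g s))"
      using assms class_K_nonneg[OF assms(2)] unfolding class_K_def
      by (auto simp: strict_mono_on_def)
    show "f (g 0) = 0" using assms unfolding class_K_def by simp
  qed
qed

lemma Kinf_inverse:
  assumes A: "class_Kinf a"
  obtains ai where "class_K ai" "\<And>y. y \<ge> 0 \<Longrightarrow> ai (a y) = y"
proof -
  have K: "class_K a" using A by (simp add: class_Kinf_def)
  have ca: "continuous_on {0..} a" and sm: "strict_mono_on {0..} a" and a0: "a 0 = 0"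
    using K by (auto simp: class_K_def)
  have lim: "filterlim a at_top at_top" using A by (simp add: class_Kinf_def)
  have surj: "\<exists>y\<ge>0. a y = v" if v: "v \<ge> 0" for v
  proof -
    have "eventually (\<lambda>y. a y \<ge> v) at_top" using lim by (simp add: filterlim_at_top)
    then obtain N where N: "\<And>y. y \<ge> N \<Longrightarrow> a y \<ge> v" by (auto simp: eventually_at_top_linorder)
    define y where "y = max N 0"
    have "a 0 \<le> v" "v \<le> a y" "0 \<le> y" using N v a0 by (auto simp: y_def)
    moreover have "continuous_on {0..y} a" using ca by (rule continuous_on_subset) auto
    ultimately show ?thesis using IVT'[of a 0 v y] by auto
  qed
  have inj: "inj_on a {0..}" using sm by (rule strict_mono_on_imp_inj_on)
  define ai where "ai = inv_into {0..} a"
  have ai_a: "ai (a y) = y" if "y \<ge> 0" for y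
    unfolding ai_def using inj that by (simp add: inv_into_f_f)
  have a_ai: "a (ai v) = v" "ai v \<ge> 0" if "v \<ge> 0" for v
  proof -
    have "v \<in> a ` {0..}" using surj[OF that] by auto
    thus "a (ai v) = v" "ai v \<ge> 0" unfolding ai_def
      by (auto simp: f_inv_into_f intro: inv_into_into[THEN atLeast_iff[THEN iffD1]])
  qed
  have smi: "strict_mono_on {0..} ai"
  proof (rule strict_mono_onI)
    fix v w :: real assume "v \<in> {0..}" "w \<in> {0..}" "v < w"
    thus "ai v < ai w" using a_ai[of v] a_ai[of w] class_K_mono[OF K, of "ai w" "ai v"]
      by (auto simp: not_less[symmetric])
  qed
  have cont_n: "continuous_on {0..a n} ai" if n: "n \<ge> 0" for n
  proof -
    have "continuous_on (a ` {0..n}) ai"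
      by (rule continuous_on_inv) (auto intro: continuous_on_subset[OF ca] ai_a)
    moreover have "{0..a n} \<subseteq> a ` {0..n}"
    proof
      fix v assume v: "v \<in> {0..a n}"
      have "ai v \<le> n"
      proof (rule ccontr)
        assume "\<not> ai v \<le> n"
        moreover have "ai v \<ge> 0" using a_ai(2)[of v] v by auto
        ultimately have "a n < a (ai v)" using n by (intro strict_mono_onD[OF sm]) auto
        thus False using a_ai[of v] v by auto
      qed
      thus "v \<in> a ` {0..n}" using a_ai[of v] v by (auto intro!: image_eqI[of v a "ai v"])
    qed
    ultimately show ?thesis by (rule continuous_on_subset)
  qed
  have "continuous_on {0..} ai"
    unfolding continuous_on_def
  proof
    fix x :: real assume x: "x \<in> {0..}"
    have c: "continuous_on {0..x+1} ai" using cont_n[of "ai (x+1)"] a_ai[of "x+1"] x by auto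
    have "at x within {0..} = at x within {0..x+1}"
      by (rule at_within_nhd[where S="{..<x+1}"]) auto
    thus "(ai \<longlongrightarrow> ai x) (at x within {0..})"
      using c x unfolding continuous_on_def by simp
  qed
  moreover have "ai 0 = 0" using ai_a[of 0] a0 by simp
  ultimately have "class_K ai" using smi by (simp add: class_K_def)
  thus ?thesis using that ai_a by blast
qed

lemma powr_concave_tangent:
  fixes x y q :: real
  assumes "0 \<le> y" "y < x" "0 < q" "q < 1"
  shows "y powr q \<le> x powr q + q * x powr (q - 1) * (y - x)"
proof (cases "y = 0")
  case True
  have "x powr (q - 1) * x = x powr q" using assms by (simp add: powr_diff)
  hence "q * x powr (q - 1) * (y - x) = - q * x powr q" using True by (simp add: algebra_simps)
  moreover have "x powr q \<ge> 0" by simp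
  ultimately show ?thesis using True assms by (simp add: algebra_simps)
next
  case False
  hence y0: "y > 0" using assms by simp
  have "\<exists>z>y. z < x \<and> x powr q - y powr q = (x - y) * (q * z powr (q - 1))"
    by (rule MVT2) (use assms y0 in \<open>auto intro!: has_real_derivative_powr\<close>)
  then obtain z where z: "y < z" "z < x" "x powr q - y powr q = (x - y) * (q * z powr (q - 1))" by blast
  have "x powr (q - 1) \<le> z powr (q - 1)"
    using z y0 assms by (intro powr_mono2') auto
  hence "(x - y) * (q * x powr (q - 1)) \<le> (x - y) * (q * z powr (q - 1))"
    using assms by (intro mult_left_mono) auto
  thus ?thesis using z by (simp add: algebra_simps)
qed

lemma BC_bdd: "u \<in> BC \<Longrightarrow> bdd_above ((\<lambda>s. norm (u s)) ` {0..})"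
proof -
  assume "u \<in> BC"
  then obtain B where "\<forall>x\<in>u ` {0..}. norm x \<le> B" unfolding BC_def bounded_iff by blast
  thus ?thesis by (intro bdd_aboveI[of _ B]) auto
qed

lemma ucnorm_upper: "u \<in> BC \<Longrightarrow> s \<ge> 0 \<Longrightarrow> norm (u s) \<le> ucnorm u"
  unfolding ucnorm_def by (rule cSUP_upper[OF _ BC_bdd]) auto

lemma ucnorm_nonneg: "u \<in> BC \<Longrightarrow> ucnorm u \<ge> 0"
  using ucnorm_upper[of u 0] norm_ge_zero order_trans by blast

lemma shift_BC: assumes "u \<in> BC" "t \<ge> 0" shows "(\<lambda>s. u (t + s)) \<in> BC"
proof -
  have c: "continuous_on {0..} u" and b: "bounded (u ` {0..})" using assms by (auto simp: BC_def)
  have "continuous_on {0..} (\<lambda>s. u (t + s))"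
    using assms by (intro continuous_on_compose2[OF c]) (auto intro!: continuous_intros)
  moreover have "(\<lambda>s. u (t + s)) ` {0..} \<subseteq> u ` {0..}" using assms by auto
  hence "bounded ((\<lambda>s. u (t + s)) ` {0..})" using b by (rule bounded_subset[rotated])
  ultimately show ?thesis by (simp add: BC_def)
qed

lemma shift_ucnorm: assumes "u \<in> BC" "t \<ge> 0" shows "ucnorm (\<lambda>s. u (t + s)) \<le> ucnorm u"
  unfolding ucnorm_def[of "\<lambda>s. u (t + s)"]
proof (rule cSUP_least)
  show "{0::real..} \<noteq> {}" by auto
  fix s :: real assume "s \<in> {0..}"
  thus "norm (u (t + s)) \<le> ucnorm u" using assms by (intro ucnorm_upper) auto
qed

lemma trajectory_bounds:
  fixes \<phi> :: "real \<Rightarrow> 'x::banach \<Rightarrow> (real \<Rightarrow> 'u::banach) \<Rightarrow> 'x" and V :: "'x \<Rightarrow> real"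
  assumes cs: "control_system \<phi>"
    and Vc: "continuous_on UNIV V" and V0: "\<And>x. V x \<ge> 0"
    and M: "M > 0" and s0: "0 < \<sigma>" "\<sigma> < 1"
    and chi: "class_K chi" and a2: "class_K \<alpha>2"
    and Vle: "\<And>x. V x \<le> \<alpha>2 (norm x)"
    and lie: "\<And>x u. u \<in> BC \<Longrightarrow> norm x \<ge> chi (ucnorm u) \<Longrightarrow> lie_deriv \<phi> V u x \<le> ereal (- M * V x powr \<sigma>)"
    and u: "u \<in> BC"
  shows "\<forall>t\<ge>0. V (\<phi> t x u) \<le> max (V x) (\<alpha>2 (chi (ucnorm u))) \<and>
     (t > V x powr (1 - \<sigma>) / ((1 - \<sigma>) * M / 4) \<longrightarrow> V (\<phi> t x u) \<le> \<alpha>2 (chi (ucnorm u)))"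
proof -
  have phi0: "\<phi> 0 x u = x"
    and contphi: "continuous_on {0..} (\<lambda>t. \<phi> t x u)"
    and coc: "\<And>t h. t \<ge> 0 \<Longrightarrow> h \<ge> 0 \<Longrightarrow> \<phi> h (\<phi> t x u) (\<lambda>s. u (t + s)) = \<phi> (t + h) x u"
  proof -
    have A: "\<forall>x. \<forall>u\<in>BC. \<phi> 0 x u = x"
      and B: "\<forall>x. \<forall>u\<in>BC. continuous_on {0..} (\<lambda>t. \<phi> t x u)"
      and C: "\<forall>t\<ge>0. \<forall>h\<ge>0. \<forall>x. \<forall>u\<in>BC. \<phi> h (\<phi> t x u) (\<lambda>s. u (t + s)) = \<phi> (t + h) x u"
      using cs unfolding control_system_def by blast+
    show "\<phi> 0 x u = x" using A u by blast
    show "continuous_on {0..} (\<lambda>t. \<phi> t x u)" using B u by blast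
    show "\<And>t h. t \<ge> 0 \<Longrightarrow> h \<ge> 0 \<Longrightarrow> \<phi> h (\<phi> t x u) (\<lambda>s. u (t + s)) = \<phi> (t + h) x u"
      using C u by blast
  qed
  define r where "r = ucnorm u"
  have r0: "r \<ge> 0" using ucnorm_nonneg[OF u] by (simp add: r_def)
  define c where "c = \<alpha>2 (chi r)"
  have c0: "c \<ge> 0" unfolding c_def using class_K_nonneg[OF a2 class_K_nonneg[OF chi r0]] .
  define w where "w = (\<lambda>t. V (\<phi> t x u))"
  have wc: "continuous_on {0..} w"
    unfolding w_def by (rule continuous_on_compose2[OF Vc contphi]) auto
  have w0: "w 0 = V x" by (simp add: w_def phi0)
  have key: "eventually (\<lambda>h. 0 < h \<and> w (t+h) - w t < -(M/2) * w t powr \<sigma> * h) (at_right 0)"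
    if t: "t \<ge> 0" and wt: "w t > c" for t
  proof -
    define y where "y = \<phi> t x u"
    define v where "v = (\<lambda>s. u (t + s))"
    have vBC: "v \<in> BC" unfolding v_def using u t by (rule shift_BC)
    have "chi (ucnorm v) \<le> chi r"
      unfolding r_def using class_K_mono[OF chi ucnorm_nonneg[OF vBC]] shift_ucnorm[OF u t]
      by (simp add: v_def)
    moreover have "chi r < norm y"
    proof (rule class_K_less_imp[OF a2])
      show "0 \<le> chi r" using chi r0 by (rule class_K_nonneg)
      show "\<alpha>2 (chi r) < \<alpha>2 (norm y)" using wt Vle[of y] by (simp add: c_def w_def y_def)
    qed simp
    ultimately have ld: "lie_deriv \<phi> V v y \<le> ereal (- M * V y powr \<sigma>)"
      using lie[OF vBC, of y] by simp
    have Vy: "V y > 0" using wt c0 by (simp add: w_def y_def)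
    hence p: "V y powr \<sigma> > 0" by simp
    have "ereal (- M * V y powr \<sigma>) < ereal (-(M/2) * V y powr \<sigma>)" using p M by simp
    with ld have "Limsup (at_right 0) (\<lambda>h. ereal ((V (\<phi> h y v) - V y) / h)) < ereal (-(M/2) * V y powr \<sigma>)"
      unfolding lie_deriv_def by (rule le_less_trans)
    hence "eventually (\<lambda>h. ereal ((V (\<phi> h y v) - V y) / h) < ereal (-(M/2) * V y powr \<sigma>)) (at_right 0)"
      by (rule Limsup_lessD)
    moreover have "eventually (\<lambda>h. (0::real) < h) (at_right 0)" by (rule eventually_at_right_less)
    ultimately show ?thesis
    proof eventually_elim
      case (elim h)
      have "\<phi> h y v = \<phi> (t + h) x u" unfolding y_def v_def using coc[of t h] t elim by simp
      hence "(w (t+h) - w t) / h < -(M/2) * w t powr \<sigma>" using elim by (simp add: w_def y_def)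
      thus ?case using elim by (simp add: pos_divide_less_eq)
    qed
  qed
  have bound_gen: "w b \<le> max (w a) c" if ab: "0 \<le> a" "a \<le> b" for a b
  proof (rule local_decrease_bound[of a b w c])
    show "a \<le> b" by fact
    show "continuous_on {a..b} w" using wc by (rule continuous_on_subset) (use ab in auto)
    fix t assume t: "a \<le> t" "t < b" "c < w t"
    have p: "w t powr \<sigma> > 0" using t c0 by simp
    have "eventually (\<lambda>h. 0 < h \<and> w (t+h) - w t < -(M/2) * w t powr \<sigma> * h) (at_right 0)"
      using key[of t] t ab by simp
    thus "eventually (\<lambda>h. w (t+h) < w t) (at_right 0)"
    proof (rule eventually_mono, elim conjE)
      fix h :: real assume h: "0 < h" "w (t+h) - w t < -(M/2) * w t powr \<sigma> * h"
      have "(M/2) * w t powr \<sigma> * h > 0" using p h M by simp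
      thus "w (t+h) < w t" using h by simp
    qed
  qed
  show ?thesis
  proof (intro allI impI conjI)
    fix t :: real assume t: "t \<ge> 0"
    show "V (\<phi> t x u) \<le> max (V x) (\<alpha>2 (chi (ucnorm u)))"
      using bound_gen[of 0 t] t unfolding w0 by (simp add: w_def c_def r_def)
    assume tbig: "t > V x powr (1 - \<sigma>) / ((1 - \<sigma>) * M / 4)"
    show "V (\<phi> t x u) \<le> \<alpha>2 (chi (ucnorm u))"
    proof (rule ccontr)
      assume "\<not> ?thesis"
      hence wt: "w t > c" by (simp add: w_def c_def r_def)
      have allc: "w s > c" if s: "0 \<le> s" "s \<le> t" for s
      proof (rule ccontr)
        assume "\<not> w s > c"
        hence "w t \<le> c" using bound_gen[of s t] s by simp
        thus False using wt by simp
      qed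
      define q where "q = 1 - \<sigma>"
      define k where "k = q * M / 4"
      have q: "0 < q" "q < 1" using s0 by (auto simp: q_def)
      have k: "k > 0" using q M by (simp add: k_def)
      define z where "z = (\<lambda>s. w s powr q + k * s)"
      have "z t \<le> max (z 0) (z 0)"
      proof (rule local_decrease_bound[of 0 t z "z 0"])
        show "0 \<le> t" by fact
        have "continuous_on {0..t} w" using wc by (rule continuous_on_subset) auto
        thus "continuous_on {0..t} z" unfolding z_def
          using q by (intro continuous_intros continuous_on_powr') (auto simp: V0 w_def)
        fix s assume s: "0 \<le> s" "s < t" "z 0 < z s"
        have ws: "w s > c" using allc s by simp
        hence X: "w s > 0" using c0 by simp
        have one: "w s powr (q - 1) * w s powr \<sigma> = 1"
          using X by (simp add: powr_add[symmetric] q_def)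
        show "eventually (\<lambda>h. z (s+h) < z s) (at_right 0)"
          using key[OF s(1) ws]
        proof (elim eventually_mono, elim conjE)
          fix h assume h: "0 < h" and dec: "w (s + h) - w s < - (M / 2) * w s powr \<sigma> * h"
          have Y0: "w (s+h) \<ge> 0" by (simp add: V0 w_def)
          have "w s powr \<sigma> > 0" using X by simp
          hence "(M/2) * w s powr \<sigma> * h > 0" using h M by simp
          hence YX: "w (s+h) < w s" using dec by simp
          have tan: "w (s+h) powr q \<le> w s powr q + q * w s powr (q - 1) * (w (s+h) - w s)"
            using powr_concave_tangent[OF Y0 YX q] .
          have "q * w s powr (q - 1) * (w (s+h) - w s) < q * w s powr (q - 1) * (- (M / 2) * w s powr \<sigma> * h)"
            using dec q X by (intro mult_strict_left_mono) auto
          also have "\<dots> = - q * (M/2) * h * (w s powr (q - 1) * w s powr \<sigma>)" by (simp add: algebra_simps)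
          also have "\<dots> = - q * (M/2) * h" using one by simp
          finally have "w (s+h) powr q < w s powr q - q * (M/2) * h" using tan by simp
          moreover have "q * M * h > 0" using h q M by simp
          moreover have "z (s+h) = w (s+h) powr q + k * s + (q * M * h) / 4" by (simp add: z_def k_def algebra_simps)
          moreover have "z s = w s powr q + k * s" by (simp add: z_def)
          ultimately show "z (s+h) < z s" by simp
        qed
      qed
      hence "w t powr q + k * t \<le> V x powr q" by (simp add: z_def w0)
      hence "k * t \<le> V x powr q" by (smt (verit) powr_ge_zero)
      hence "t \<le> V x powr q / k" using k by (simp add: pos_le_divide_eq mult.commute)
      thus False using tbig by (simp add: q_def k_def)
    qed
  qed
qed

theorem theorem1:
  fixes \<phi> :: "real \<Rightarrow> 'x::banach \<Rightarrow> (real \<Rightarrow> 'u::banach) \<Rightarrow> 'x"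
  assumes "control_system \<phi>"
    and "equilibrium \<phi> 0"
    and "\<And>x. equilibrium \<phi> x \<Longrightarrow> x = 0"
    and "\<exists>V. FTISS_Lyapunov \<phi> V"
  shows "FTISS \<phi>"
proof -
  obtain V where FL: "FTISS_Lyapunov \<phi> V" using assms(4) by blast
  have Vc: "continuous_on UNIV V" and V0: "\<And>x. V x \<ge> 0"
    using FL unfolding FTISS_Lyapunov_def by auto
  obtain M \<sigma> \<alpha>1 \<alpha>2 chi where M: "M > 0" and s0: "0 < \<sigma>" "\<sigma> < 1"
    and a1: "class_Kinf \<alpha>1" and a2i: "class_Kinf \<alpha>2" and chi: "class_K chi"
    and sand: "\<And>x. \<alpha>1 (norm x) \<le> V x \<and> V x \<le> \<alpha>2 (norm x)"
    and lie0: "\<forall>x. \<forall>u\<in>BC. norm x \<ge> chi (ucnorm u) \<longrightarrow> lie_deriv \<phi> V u x \<le> ereal (- M * V x powr \<sigma>)"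
    using FL unfolding FTISS_Lyapunov_def by blast
  have lie: "\<And>x u. u \<in> BC \<Longrightarrow> norm x \<ge> chi (ucnorm u) \<Longrightarrow> lie_deriv \<phi> V u x \<le> ereal (- M * V x powr \<sigma>)"
    using lie0 by blast
  have a2: "class_K \<alpha>2" using a2i by (simp add: class_Kinf_def)
  have a1K: "class_K \<alpha>1" using a1 by (simp add: class_Kinf_def)
  obtain ai where ai: "class_K ai" and ai_a: "\<And>y. y \<ge> 0 \<Longrightarrow> ai (\<alpha>1 y) = y"
    using Kinf_inverse[OF a1] by blast
  have ai_le: "y \<le> ai v" if "\<alpha>1 y \<le> v" "y \<ge> 0" for y v
  proof -
    have "ai (\<alpha>1 y) \<le> ai v" using class_K_mono[OF ai class_K_nonneg[OF a1K \<open>y \<ge> 0\<close>] that(1)] .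
    thus ?thesis using ai_a[OF that(2)] by simp
  qed
  define K where "K = (\<lambda>s. ai (\<alpha>2 s))"
  have KK: "class_K K" unfolding K_def by (rule class_K_comp[OF ai a2])
  have Kc: "continuous_on {0..} K" using KK by (simp add: class_K_def)
  define \<gamma> where "\<gamma> = (\<lambda>r. K (chi r))"
  have gK: "class_K \<gamma>" unfolding \<gamma>_def by (rule class_K_comp[OF KK chi])
  define q where "q = 1 - \<sigma>"
  define k where "k = (1 - \<sigma>) * M / 4"
  have q: "0 < q" "q < 1" using s0 by (auto simp: q_def)
  have k: "k > 0" using s0 M by (simp add: k_def)
  define T where "T = (\<lambda>s. \<alpha>2 s powr q / k + 1)"
  have T1: "T s \<ge> 1" for s using k by (simp add: T_def)
  have Tc: "continuous_on {0..} T"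
  proof -
    have c2: "continuous_on {0..} \<alpha>2" using a2 by (simp add: class_K_def)
    have "continuous_on {0..} (\<lambda>s. \<alpha>2 s powr q)"
    proof (rule continuous_on_powr'[OF c2 continuous_on_const])
      show "\<forall>x\<in>{0..}. 0 \<le> \<alpha>2 x \<and> (\<alpha>2 x = 0 \<longrightarrow> 0 < q)"
        using q(1) class_K_nonneg[OF a2] by auto
    qed
    hence "continuous_on {0..} (\<lambda>s. \<alpha>2 s powr q / k)"
      using k by (intro continuous_on_divide continuous_on_const) auto
    thus ?thesis unfolding T_def by (intro continuous_on_add continuous_on_const)
  qed
  define \<beta> where "\<beta> = (\<lambda>s t. K s * min 1 (max 0 (2 - t / T s)))"
  have Knn: "K s \<ge> 0" if "s \<ge> 0" for s using class_K_nonneg[OF KK that] .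
  have bnn: "\<beta> s t \<ge> 0" if "s \<ge> 0" for s t using Knn[OF that] by (simp add: \<beta>_def)
  have GKL: "class_GKL \<beta>"
    unfolding class_GKL_def
  proof (intro conjI allI impI)
    have eq: "(\<lambda>(s,t). \<beta> s t) = (\<lambda>p. K (fst p) * min 1 (max 0 (2 - snd p / T (fst p))))"
      by (auto simp: \<beta>_def fun_eq_iff)
    have Kf: "continuous_on ({0..} \<times> {0..}) (\<lambda>p. K (fst p))"
      by (rule continuous_on_compose2[OF Kc continuous_on_fst]) auto
    have Tf: "continuous_on ({0..} \<times> {0..}) (\<lambda>p. T (fst p))"
      by (rule continuous_on_compose2[OF Tc continuous_on_fst]) auto
    have "\<forall>p. T (fst p) \<noteq> 0" using T1 by (metis not_one_le_zero)
    thus "continuous_on ({0..} \<times> {0..}) (\<lambda>(s,t). \<beta> s t)" unfolding eq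
      by (intro continuous_intros Kf Tf) auto
  next
    fix s t :: real assume "0 \<le> s" "0 \<le> t" thus "0 \<le> \<beta> s t" using bnn by simp
  next
    have "(\<lambda>s. \<beta> s 0) = K" by (simp add: \<beta>_def fun_eq_iff)
    thus "class_K (\<lambda>s. \<beta> s 0)" using KK by simp
  next
    fix s :: real assume s: "0 \<le> s"
    have "T s \<noteq> 0" using T1[of s] by auto
    thus "continuous_on {0..} (\<beta> s)" unfolding \<beta>_def by (intro continuous_intros) auto
    show "antimono_on {0..} (\<beta> s)"
    proof (rule monotone_onI)
      fix a b :: real assume "a \<in> {0..}" "b \<in> {0..}" "a \<le> b"
      have "b / T s \<ge> a / T s" using \<open>a \<le> b\<close> T1[of s] by (intro divide_right_mono) auto
      hence "min 1 (max 0 (2 - b / T s)) \<le> min 1 (max 0 (2 - a / T s))" by simp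
      thus "\<beta> s b \<le> \<beta> s a" unfolding \<beta>_def using Knn[OF s] by (rule mult_left_mono)
    qed
    have z: "\<beta> s t = 0" if "t \<ge> 2 * T s" for t
    proof -
      have "t / T s \<ge> 2" using that T1[of s] by (simp add: pos_le_divide_eq)
      thus ?thesis by (simp add: \<beta>_def)
    qed
    hence "eventually (\<lambda>t. \<beta> s t = 0) at_top" by (auto simp: eventually_at_top_linorder)
    thus "(\<beta> s \<longlongrightarrow> 0) at_top" by (rule tendsto_eventually)
  next
    show "\<exists>T'. continuous_on {0..} T' \<and> (\<forall>s\<ge>0. T' s \<ge> 0 \<and> (\<forall>t\<ge>T' s. \<beta> s t = 0))"
    proof (intro exI conjI allI impI)
      show "continuous_on {0..} (\<lambda>s. 2 * T s)" using Tc by (intro continuous_intros)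
      fix s :: real assume "s \<ge> 0"
      show "0 \<le> 2 * T s" using T1[of s] by simp
      fix t assume t: "t \<ge> 2 * T s"
      have "t / T s \<ge> 2" using t T1[of s] by (simp add: pos_le_divide_eq)
      thus "\<beta> s t = 0" by (simp add: \<beta>_def)
    qed
  qed
  have bound: "norm (\<phi> t x u) \<le> \<beta> (norm x) t + \<gamma> (ucnorm u)" if t: "t \<ge> 0" and u: "u \<in> BC" for t x u
  proof -
    have tb: "V (\<phi> t x u) \<le> max (V x) (\<alpha>2 (chi (ucnorm u))) \<and>
     (t > V x powr (1 - \<sigma>) / ((1 - \<sigma>) * M / 4) \<longrightarrow> V (\<phi> t x u) \<le> \<alpha>2 (chi (ucnorm u)))"
      using trajectory_bounds[OF assms(1) Vc V0 M s0 chi a2 _ lie u, of x] sand t by blast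
    define y where "y = norm (\<phi> t x u)"
    define c where "c = \<alpha>2 (chi (ucnorm u))"
    have c0: "c \<ge> 0" unfolding c_def
      using class_K_nonneg[OF a2 class_K_nonneg[OF chi ucnorm_nonneg[OF u]]] .
    have a1y: "\<alpha>1 y \<le> V (\<phi> t x u)" using sand by (simp add: y_def)
    have gc: "\<gamma> (ucnorm u) = ai c" by (simp add: \<gamma>_def K_def c_def)
    have g0: "\<gamma> (ucnorm u) \<ge> 0" using class_K_nonneg[OF gK ucnorm_nonneg[OF u]] .
    show ?thesis
    proof (cases "t > V x powr q / k")
      case True
      hence "V (\<phi> t x u) \<le> c" using tb by (simp add: q_def k_def c_def)
      hence "y \<le> \<gamma> (ucnorm u)" unfolding gc using a1y by (intro ai_le) (auto simp: y_def)
      thus ?thesis using bnn[of "norm x" t] by (simp add: y_def)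
    next
      case False
      have "V x powr q \<le> \<alpha>2 (norm x) powr q" using sand[of x] V0[of x] q by (intro powr_mono2) auto
      hence "V x powr q / k \<le> \<alpha>2 (norm x) powr q / k" using k by (intro divide_right_mono) auto
      hence "t < T (norm x)" using False by (simp add: T_def)
      hence "t / T (norm x) < 1" using T1[of "norm x"] by (simp add: divide_less_eq)
      hence bK: "\<beta> (norm x) t = K (norm x)" by (simp add: \<beta>_def)
      have "V (\<phi> t x u) \<le> max (\<alpha>2 (norm x)) c" using tb sand[of x] by (auto simp: c_def)
      hence "y \<le> K (norm x) \<or> y \<le> \<gamma> (ucnorm u)" unfolding gc K_def using a1y
        by (cases "\<alpha>2 (norm x) \<le> c") (auto intro!: ai_le simp: y_def max_def)
      thus ?thesis using bK Knn[of "norm x"] g0 by (auto simp: y_def)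
    qed
  qed
  show ?thesis unfolding FTISS_def using GKL gK bound by blast
qed

end
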